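(* Let $n,k,d$ be positive integers with $k\le d<n$, and let $n_1,\dots,n_l$ be positive integers with $n=n_1+\dots+n_l$ and $n_j\ge n-k+1$ for all $j=1,\dots,l$. Define $k_j=n_j-n+k$ and $d_j=n_j-n+d$ for $j=1,\dots,l$. Then for all $\alpha,\gamma>0$, $$C^{\mathrm{exact}}_{n,k,d}(\alpha,\gamma)\ \ge\ \sum_{j=1}^{l}C^{\mathrm{exact}}_{n_j,k_j,d_j}(\alpha,\gamma).$$
   Context: A distributed storage system (DSS) with parameters $(n,k,d)$ stores a file across $n$ nodes, each storing an amount $\alpha$ of information (e.g. $\alpha$ symbols over a finite field, where symbols may be split into arbitrarily many sub-symbols), such that the file can be reconstructed from the contents of any $k$ nodes, and any lost node can be repaired by contacting any $d$ of the remaining nodes, each of which transmits an amount $\beta$ to the replacement node, for a total repair bandwidth $\gamma=d\beta$. Repair is exact: the replacement node stores exactly the same content as the lost node. $C^{\mathrm{exact}}_{n,k,d}(\alpha,\gamma)$ denotes the maximum size of a file that can be stored by such an exact-repair DSS with $n$ nodes, node size $\alpha$ and total repair bandwidth $\gamma$. *)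

theory Defs
  imports Complex_Main "HOL-Library.FuncSet"
begin

text \<open>
  Amounts of information are measured in units of L bits, where the unit L > 0 is free
  (this models splitting symbols into arbitrarily many sub-symbols): a node may take at
  most 2 powr (alpha * L) distinct values, each helper message at most
  2 powr (beta * L) distinct values with beta = gamma / d, and the file size is
  log 2 (card F) / L.
\<close>

definition is_exact_dss ::
  "nat \<Rightarrow> nat \<Rightarrow> nat \<Rightarrow> real \<Rightarrow> real \<Rightarrow> real \<Rightarrow> nat set \<Rightarrow> (nat \<Rightarrow> nat \<Rightarrow> nat) \<Rightarrow> bool"
where
  "is_exact_dss n k d \<alpha> \<gamma> L F enc \<longleftrightarrow>
     L > 0 \<and> finite F \<and> F \<noteq> {} \<and>
     \<comment> \<open>storage constraint\<close>
     (\<forall>i<n. real (card (enc i ` F)) \<le> 2 powr (\<alpha> * L)) \<and>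
     \<comment> \<open>reconstruction from any k nodes\<close>
     (\<forall>K. K \<subseteq> {..<n} \<and> card K = k \<longrightarrow>
        inj_on (\<lambda>f. restrict (\<lambda>j. enc j f) K) F) \<and>
     \<comment> \<open>exact repair of any node i from any d other nodes, each sending beta = gamma/d\<close>
     (\<forall>i<n. \<forall>H. H \<subseteq> {..<n} - {i} \<and> card H = d \<longrightarrow>
        (\<exists>(msg :: nat \<Rightarrow> nat \<Rightarrow> nat) (rep :: (nat \<Rightarrow> nat) \<Rightarrow> nat).
           (\<forall>h\<in>H. real (card ((\<lambda>f. msg h (enc h f)) ` F)) \<le> 2 powr (\<gamma> / real d * L)) \<and>
           (\<forall>f\<in>F. rep (restrict (\<lambda>h. msg h (enc h f)) H) = enc i f)))"

definition C_exact :: "nat \<Rightarrow> nat \<Rightarrow> nat \<Rightarrow> real \<Rightarrow> real \<Rightarrow> real" where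
  "C_exact n k d \<alpha> \<gamma> =
     Sup {log 2 (real (card F)) / L | L F enc. is_exact_dss n k d \<alpha> \<gamma> L F enc}"

end

theory Submission
  imports Defs "HOL-Library.Nat_Bijection" "HOL-Combinatorics.Permutations"
begin

definition pcode :: "nat \<Rightarrow> nat \<Rightarrow> nat \<Rightarrow> nat set \<Rightarrow> (nat \<Rightarrow> nat \<Rightarrow> nat) \<Rightarrow> (nat \<Rightarrow> real) \<Rightarrow> (nat \<Rightarrow> nat set \<Rightarrow> nat \<Rightarrow> real) \<Rightarrow> bool" where
"pcode n k d F e a b \<longleftrightarrow> finite F \<and> F \<noteq> {} \<and>
 (\<forall>i<n. real (card (e i ` F)) \<le> 2 powr a i) \<and>
 (\<forall>K. K \<subseteq> {..<n} \<and> card K = k \<longrightarrow> inj_on (\<lambda>f. restrict (\<lambda>j. e j f) K) F) \<and>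
 (\<forall>i<n. \<forall>H. H \<subseteq> {..<n} - {i} \<and> card H = d \<longrightarrow>
    (\<exists>(msg :: nat \<Rightarrow> nat \<Rightarrow> nat) (rep :: (nat \<Rightarrow> nat) \<Rightarrow> nat).
       (\<forall>h\<in>H. real (card ((\<lambda>f. msg h (e h f)) ` F)) \<le> 2 powr b i H h) \<and>
       (\<forall>f\<in>F. rep (restrict (\<lambda>h. msg h (e h f)) H) = e i f)))"


lemma pcodeD:
  assumes "pcode n k d F e a b"
  shows pcode_fin: "finite F" and pcode_ne: "F \<noteq> {}"
    and pcode_stor: "\<And>i. i < n \<Longrightarrow> real (card (e i ` F)) \<le> 2 powr a i"
    and pcode_recon: "\<And>K. K \<subseteq> {..<n} \<Longrightarrow> card K = k \<Longrightarrow> inj_on (\<lambda>f. restrict (\<lambda>j. e j f) K) F"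
    and pcode_rep: "\<And>i H. i < n \<Longrightarrow> H \<subseteq> {..<n} - {i} \<Longrightarrow> card H = d \<Longrightarrow>
    (\<exists>(msg :: nat \<Rightarrow> nat \<Rightarrow> nat) (rep :: (nat \<Rightarrow> nat) \<Rightarrow> nat).
       (\<forall>h\<in>H. real (card ((\<lambda>f. msg h (e h f)) ` F)) \<le> 2 powr b i H h) \<and>
       (\<forall>f\<in>F. rep (restrict (\<lambda>h. msg h (e h f)) H) = e i f))"
  using assms unfolding pcode_def by blast+

lemma pcodeI:
  assumes "finite F" "F \<noteq> {}"
    "\<And>i. i < n \<Longrightarrow> real (card (e i ` F)) \<le> 2 powr a i"
    "\<And>K. K \<subseteq> {..<n} \<Longrightarrow> card K = k \<Longrightarrow> inj_on (\<lambda>f. restrict (\<lambda>j. e j f) K) F"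
    "\<And>i H. i < n \<Longrightarrow> H \<subseteq> {..<n} - {i} \<Longrightarrow> card H = d \<Longrightarrow>
    (\<exists>(msg :: nat \<Rightarrow> nat \<Rightarrow> nat) (rep :: (nat \<Rightarrow> nat) \<Rightarrow> nat).
       (\<forall>h\<in>H. real (card ((\<lambda>f. msg h (e h f)) ` F)) \<le> 2 powr b i H h) \<and>
       (\<forall>f\<in>F. rep (restrict (\<lambda>h. msg h (e h f)) H) = e i f))"
  shows "pcode n k d F e a b"
  using assms unfolding pcode_def by blast

definition code :: "nat \<Rightarrow> (nat \<Rightarrow> nat) \<Rightarrow> nat" where
  "code N g = list_encode (map g [0..<N])"

lemma code_nth: "t < N \<Longrightarrow> list_decode (code N g) ! t = g t"
  by (simp add: code_def)

lemma code_eq: "code N g = code N g' \<Longrightarrow> t < N \<Longrightarrow> g t = g' t"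
proof -
  assume a: "code N g = code N g'" "t < N"
  have "list_decode (code N g) ! t = list_decode (code N g') ! t" using a by simp
  thus ?thesis using code_nth[OF a(2)] by simp
qed

lemma code_cong: "(\<And>t. t < N \<Longrightarrow> g t = g' t) \<Longrightarrow> code N g = code N g'"
  unfolding code_def by (intro arg_cong[where f=list_encode] map_cong) auto

lemma inj_code: "inj_on (code N) (PiE {..<N} Y)"
proof (rule inj_onI)
  fix g g' assume g: "g \<in> PiE {..<N} Y" "g' \<in> PiE {..<N} Y" and e: "code N g = code N g'"
  show "g = g'" by (rule PiE_ext[OF g]) (use code_eq[OF e] in auto)
qed


lemma card_code_le:
  assumes "\<forall>x\<in>X. \<forall>t<N. \<psi> t x \<in> Y t" and "\<forall>t<N. finite (Y t)"
  shows "card ((\<lambda>x. code N (\<lambda>t. \<psi> t x)) ` X) \<le> (\<Prod>t<N. card (Y t))"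
proof -
  have "(\<lambda>x. code N (\<lambda>t. \<psi> t x)) ` X \<subseteq> code N ` PiE {..<N} Y"
  proof
    fix z assume "z \<in> (\<lambda>x. code N (\<lambda>t. \<psi> t x)) ` X"
    then obtain x where x: "x \<in> X" "z = code N (\<lambda>t. \<psi> t x)" by auto
    have "restrict (\<lambda>t. \<psi> t x) {..<N} \<in> PiE {..<N} Y" using assms(1) x(1) by auto
    moreover have "z = code N (restrict (\<lambda>t. \<psi> t x) {..<N})" using x(2) by (auto intro: code_cong)
    ultimately show "z \<in> code N ` PiE {..<N} Y" by blast
  qed
  hence "card ((\<lambda>x. code N (\<lambda>t. \<psi> t x)) ` X) \<le> card (code N ` PiE {..<N} Y)"
    using assms(2) by (intro card_mono) (auto intro!: finite_PiE)
  also have "\<dots> \<le> card (PiE {..<N} Y)" by (rule card_image_le) (use assms(2) in \<open>auto intro!: finite_PiE\<close>)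
  also have "\<dots> = (\<Prod>t<N. card (Y t))" by (simp add: card_PiE)
  finally show ?thesis .
qed

lemma real_prod_le_powr:
  assumes "\<forall>t<N. real (c t) \<le> 2 powr (a t)"
  shows "real (\<Prod>t<N. c t) \<le> 2 powr (\<Sum>t<N. a t)"
proof -
  have "real (\<Prod>t<N. c t) = (\<Prod>t<N. real (c t))" by simp
  also have "\<dots> \<le> (\<Prod>t<N. 2 powr a t)" using assms by (intro prod_mono) auto
  also have "\<dots> = 2 powr (\<Sum>t<N. a t)" by (simp add: powr_sum)
  finally show ?thesis .
qed


lemma pcode_prod:
  assumes P: "\<forall>t<N. pcode n k d (F t) (e t) (a t) (b t)"
  shows "pcode n k d (code N ` PiE {..<N} F) (\<lambda>i x. code N (\<lambda>t. e t i (list_decode x ! t)))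
           (\<lambda>i. \<Sum>t<N. a t i) (\<lambda>i H h. \<Sum>t<N. b t i H h)
         \<and> card (code N ` PiE {..<N} F) = (\<Prod>t<N. card (F t))"
proof -
  define Fc where "Fc = code N ` PiE {..<N} F"
  define ec where "ec = (\<lambda>i x. code N (\<lambda>t. e t i (list_decode x ! t)))"
  have Pt: "pcode n k d (F t) (e t) (a t) (b t)" if "t < N" for t using P that by blast
  have fin: "\<forall>t<N. finite (F t)" using pcode_fin[OF Pt] by blast
  have ne: "\<forall>t<N. F t \<noteq> {}" using pcode_ne[OF Pt] by blast
  have dec: "list_decode x ! t \<in> F t" if xF: "x \<in> Fc" and tN: "t < N" for x t
  proof -
    obtain g where "g \<in> PiE {..<N} F" "x = code N g" using xF unfolding Fc_def by blast
    thus ?thesis using tN by (simp add: code_nth PiE_mem)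
  qed
  have cardFc: "card Fc = (\<Prod>t<N. card (F t))"
    unfolding Fc_def by (subst card_image[OF inj_code]) (simp add: card_PiE)
  have finFc: "finite Fc" unfolding Fc_def using fin by (auto intro!: finite_PiE)
  have neFc: "Fc \<noteq> {}" unfolding Fc_def using ne by (simp add: PiE_eq_empty_iff)
  have stor: "real (card (ec i ` Fc)) \<le> 2 powr (\<Sum>t<N. a t i)" if iN: "i < n" for i
  proof -
    have "card (ec i ` Fc) \<le> (\<Prod>t<N. card (e t i ` F t))"
      unfolding ec_def by (rule card_code_le) (use dec fin in auto)
    hence "real (card (ec i ` Fc)) \<le> real (\<Prod>t<N. card (e t i ` F t))" by linarith
    also have "\<dots> \<le> 2 powr (\<Sum>t<N. a t i)"
    proof (rule real_prod_le_powr, intro allI impI)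
      fix t assume "t < N"
      from pcode_stor[OF Pt[OF this] iN] show "real (card (e t i ` F t)) \<le> 2 powr a t i" .
    qed
    finally show ?thesis .
  qed
  have recon: "inj_on (\<lambda>f. restrict (\<lambda>j. ec j f) K) Fc" if K: "K \<subseteq> {..<n}" "card K = k" for K
  proof (rule inj_onI)
    fix x x' assume x: "x \<in> Fc" "x' \<in> Fc" and eq: "restrict (\<lambda>j. ec j x) K = restrict (\<lambda>j. ec j x') K"
    obtain g g' where g: "g \<in> PiE {..<N} F" "x = code N g" "g' \<in> PiE {..<N} F" "x' = code N g'"
      using x unfolding Fc_def by blast
    have "g t = g' t" if t: "t < N" for t
    proof -
      have inj: "inj_on (\<lambda>f. restrict (\<lambda>j. e t j f) K) (F t)" using pcode_recon[OF Pt[OF t] K] .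
      have "restrict (\<lambda>j. e t j (g t)) K = restrict (\<lambda>j. e t j (g' t)) K"
      proof
        fix j show "restrict (\<lambda>j. e t j (g t)) K j = restrict (\<lambda>j. e t j (g' t)) K j"
        proof (cases "j \<in> K")
          case True
          hence "ec j x = ec j x'" using fun_cong[OF eq, of j] by simp
          hence "e t j (list_decode x ! t) = e t j (list_decode x' ! t)"
            unfolding ec_def using code_eq t by blast
          thus ?thesis using True g t by (simp add: code_nth)
        qed simp
      qed
      moreover have "g t \<in> F t" "g' t \<in> F t" using g t by auto
      ultimately show ?thesis using inj by (auto dest: inj_onD)
    qed
    hence "g = g'" using g by (intro PiE_ext[of g "{..<N}" F]) auto
    thus "x = x'" using g by simp
  qed
  have rep: "\<exists>(msg :: nat \<Rightarrow> nat \<Rightarrow> nat) (rep :: (nat \<Rightarrow> nat) \<Rightarrow> nat).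
       (\<forall>h\<in>H. real (card ((\<lambda>f. msg h (ec h f)) ` Fc)) \<le> 2 powr (\<Sum>t<N. b t i H h)) \<and>
       (\<forall>f\<in>Fc. rep (restrict (\<lambda>h. msg h (ec h f)) H) = ec i f)"
    if i: "i < n" and H: "H \<subseteq> {..<n} - {i}" "card H = d" for i H
  proof -
    have "\<forall>t\<in>{..<N}. \<exists>mr :: (nat \<Rightarrow> nat \<Rightarrow> nat) \<times> ((nat \<Rightarrow> nat) \<Rightarrow> nat).
       (\<forall>h\<in>H. real (card ((\<lambda>f. fst mr h (e t h f)) ` F t)) \<le> 2 powr b t i H h) \<and>
       (\<forall>f\<in>F t. snd mr (restrict (\<lambda>h. fst mr h (e t h f)) H) = e t i f)"
    proof
      fix t assume "t \<in> {..<N}"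
      hence Ptt: "pcode n k d (F t) (e t) (a t) (b t)" using Pt by auto
      obtain msg :: "nat \<Rightarrow> nat \<Rightarrow> nat" and rep :: "(nat \<Rightarrow> nat) \<Rightarrow> nat" where
        "(\<forall>h\<in>H. real (card ((\<lambda>f. msg h (e t h f)) ` F t)) \<le> 2 powr b t i H h) \<and>
         (\<forall>f\<in>F t. rep (restrict (\<lambda>h. msg h (e t h f)) H) = e t i f)"
        using pcode_rep[OF Ptt i H] by blast
      thus "\<exists>mr :: (nat \<Rightarrow> nat \<Rightarrow> nat) \<times> ((nat \<Rightarrow> nat) \<Rightarrow> nat).
       (\<forall>h\<in>H. real (card ((\<lambda>f. fst mr h (e t h f)) ` F t)) \<le> 2 powr b t i H h) \<and>
       (\<forall>f\<in>F t. snd mr (restrict (\<lambda>h. fst mr h (e t h f)) H) = e t i f)"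
        by (intro exI[of _ "(msg, rep)"]) simp
    qed
    from bchoice[OF this] obtain mr :: "nat \<Rightarrow> (nat \<Rightarrow> nat \<Rightarrow> nat) \<times> ((nat \<Rightarrow> nat) \<Rightarrow> nat)" where mr0: "\<forall>t\<in>{..<N}.
       (\<forall>h\<in>H. real (card ((\<lambda>f. fst (mr t) h (e t h f)) ` F t)) \<le> 2 powr b t i H h) \<and>
       (\<forall>f\<in>F t. snd (mr t) (restrict (\<lambda>h. fst (mr t) h (e t h f)) H) = e t i f)" ..
    have mr: "\<And>t. t < N \<Longrightarrow>
       (\<forall>h\<in>H. real (card ((\<lambda>f. fst (mr t) h (e t h f)) ` F t)) \<le> 2 powr b t i H h) \<and>
       (\<forall>f\<in>F t. snd (mr t) (restrict (\<lambda>h. fst (mr t) h (e t h f)) H) = e t i f)"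
      using mr0 by simp
    define msg where "msg = (\<lambda>h y. code N (\<lambda>t. fst (mr t) h (list_decode y ! t)))"
    define rp where "rp = (\<lambda>g. code N (\<lambda>t. snd (mr t) (restrict (\<lambda>h. list_decode (g h) ! t) H)))"
    have me: "msg h (ec h x) = code N (\<lambda>t. fst (mr t) h (e t h (list_decode x ! t)))" for h x
      unfolding msg_def ec_def by (rule code_cong) (simp add: code_nth)
    show ?thesis
    proof (intro exI conjI ballI)
      fix h assume h: "h \<in> H"
      have "card ((\<lambda>f. msg h (ec h f)) ` Fc) \<le> (\<Prod>t<N. card ((\<lambda>f. fst (mr t) h (e t h f)) ` F t))"
        unfolding me by (rule card_code_le) (use dec fin in auto)
      hence "real (card ((\<lambda>f. msg h (ec h f)) ` Fc)) \<le> real (\<Prod>t<N. card ((\<lambda>f. fst (mr t) h (e t h f)) ` F t))"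
        by linarith
      also have "\<dots> \<le> 2 powr (\<Sum>t<N. b t i H h)"
        by (rule real_prod_le_powr) (use mr h in auto)
      finally show "real (card ((\<lambda>f. msg h (ec h f)) ` Fc)) \<le> 2 powr (\<Sum>t<N. b t i H h)" .
    next
      fix x assume x: "x \<in> Fc"
      have "rp (restrict (\<lambda>h. msg h (ec h x)) H) = code N (\<lambda>t. e t i (list_decode x ! t))"
        unfolding rp_def
      proof (rule code_cong)
        fix t assume t: "t < N"
        have "restrict (\<lambda>h. list_decode (restrict (\<lambda>h. msg h (ec h x)) H h) ! t) H
              = restrict (\<lambda>h. fst (mr t) h (e t h (list_decode x ! t))) H"
          using t by (auto simp: me code_nth)
        thus "snd (mr t) (restrict (\<lambda>h. list_decode (restrict (\<lambda>h. msg h (ec h x)) H h) ! t) H)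
              = e t i (list_decode x ! t)"
          using mr[OF t] dec[OF x t] by simp
      qed
      thus "rp (restrict (\<lambda>h. msg h (ec h x)) H) = ec i x" by (simp add: ec_def)
    qed
  qed
  have "pcode n k d Fc ec (\<lambda>i. \<Sum>t<N. a t i) (\<lambda>i H h. \<Sum>t<N. b t i H h)"
    by (rule pcodeI[OF finFc neFc stor recon rep])
  thus ?thesis using cardFc unfolding Fc_def ec_def by simp
qed


lemma pcode_mono:
  assumes P: "pcode n k d F e a b"
    and A: "\<And>i. i < n \<Longrightarrow> a i \<le> a' i"
    and B: "\<And>i H h. i < n \<Longrightarrow> H \<subseteq> {..<n} - {i} \<Longrightarrow> card H = d \<Longrightarrow> h \<in> H \<Longrightarrow> b i H h \<le> b' i H h"
  shows "pcode n k d F e a' b'"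
proof (rule pcodeI)
  show "finite F" "F \<noteq> {}" using pcode_fin[OF P] pcode_ne[OF P] by auto
  show "real (card (e i ` F)) \<le> 2 powr a' i" if "i < n" for i
    using pcode_stor[OF P that] A[OF that] by (meson order_trans powr_mono one_le_numeral)
  show "inj_on (\<lambda>f. restrict (\<lambda>j. e j f) K) F" if "K \<subseteq> {..<n}" "card K = k" for K
    using pcode_recon[OF P that] .
  show "\<exists>(msg :: nat \<Rightarrow> nat \<Rightarrow> nat) (rep :: (nat \<Rightarrow> nat) \<Rightarrow> nat).
       (\<forall>h\<in>H. real (card ((\<lambda>f. msg h (e h f)) ` F)) \<le> 2 powr b' i H h) \<and>
       (\<forall>f\<in>F. rep (restrict (\<lambda>h. msg h (e h f)) H) = e i f)"
    if iH: "i < n" "H \<subseteq> {..<n} - {i}" "card H = d" for i H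
  proof -
    obtain msg :: "nat \<Rightarrow> nat \<Rightarrow> nat" and rep :: "(nat \<Rightarrow> nat) \<Rightarrow> nat" where
      m: "\<forall>h\<in>H. real (card ((\<lambda>f. msg h (e h f)) ` F)) \<le> 2 powr b i H h" and
      r: "\<forall>f\<in>F. rep (restrict (\<lambda>h. msg h (e h f)) H) = e i f"
      using pcode_rep[OF P iH] by blast
    have "\<forall>h\<in>H. real (card ((\<lambda>f. msg h (e h f)) ` F)) \<le> 2 powr b' i H h"
    proof
      fix h assume h: "h \<in> H"
      show "real (card ((\<lambda>f. msg h (e h f)) ` F)) \<le> 2 powr b' i H h"
        using m h B[OF iH h] by (meson order_trans powr_mono one_le_numeral)
    qed
    thus ?thesis using r by blast
  qed
qed

lemma dss_pcode:
  assumes "is_exact_dss n k d \<alpha> \<gamma> L F enc"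
  shows "pcode n k d F enc (\<lambda>_. \<alpha> * L) (\<lambda>_ _ _. \<gamma> / real d * L)"
  using assms unfolding is_exact_dss_def pcode_def by blast

lemma pcode_dss:
  assumes P: "pcode n k d F e a b" and L: "L > 0"
    and A: "\<And>i. i < n \<Longrightarrow> a i \<le> \<alpha> * L"
    and B: "\<And>i H h. i < n \<Longrightarrow> H \<subseteq> {..<n} - {i} \<Longrightarrow> card H = d \<Longrightarrow> h \<in> H \<Longrightarrow> b i H h \<le> \<gamma> / real d * L"
  shows "is_exact_dss n k d \<alpha> \<gamma> L F e"
proof -
  have "pcode n k d F e (\<lambda>_. \<alpha> * L) (\<lambda>_ _ _. \<gamma> / real d * L)"
    by (rule pcode_mono[OF P]) (use A B in auto)
  thus ?thesis using L unfolding is_exact_dss_def pcode_def by blast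
qed

lemma dss_bound:
  assumes D: "is_exact_dss n k d \<alpha> \<gamma> L F enc" and k: "k \<le> n"
  shows "log 2 (real (card F)) / L \<le> real k * \<alpha>"
proof -
  have L: "L > 0" and fin: "finite F" and ne: "F \<noteq> {}" using D unfolding is_exact_dss_def by blast+
  have st: "\<forall>i<n. real (card (enc i ` F)) \<le> 2 powr (\<alpha> * L)" using D unfolding is_exact_dss_def by blast
  have inj: "inj_on (\<lambda>f. restrict (\<lambda>j. enc j f) {..<k}) F"
    using D k unfolding is_exact_dss_def by auto
  have "card F \<le> card (PiE {..<k} (\<lambda>j. enc j ` F))"
  proof (rule card_inj_on_le[OF inj])
    show "(\<lambda>f. restrict (\<lambda>j. enc j f) {..<k}) ` F \<subseteq> PiE {..<k} (\<lambda>j. enc j ` F)"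
    proof
      fix z assume "z \<in> (\<lambda>f. restrict (\<lambda>j. enc j f) {..<k}) ` F"
      then obtain f where "f \<in> F" "z = restrict (\<lambda>j. enc j f) {..<k}" by blast
      thus "z \<in> PiE {..<k} (\<lambda>j. enc j ` F)" by (simp only: restrict_PiE_iff) blast
    qed
    show "finite (PiE {..<k} (\<lambda>j. enc j ` F))" using fin by (auto intro!: finite_PiE)
  qed
  also have "\<dots> = (\<Prod>j<k. card (enc j ` F))" by (simp add: card_PiE)
  finally have "real (card F) \<le> real (\<Prod>j<k. card (enc j ` F))" by linarith
  also have "\<dots> \<le> 2 powr (\<Sum>j<k. \<alpha> * L)"
    by (rule real_prod_le_powr) (use st k in auto)
  finally have c: "real (card F) \<le> 2 powr (real k * \<alpha> * L)" by (simp add: mult.assoc)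
  have pos: "0 < real (card F)" using fin ne by (simp add: card_gt_0_iff)
  have "log 2 (real (card F)) \<le> log 2 (2 powr (real k * \<alpha> * L))"
    by (rule log_mono) (use c pos in auto)
  hence "log 2 (real (card F)) \<le> real k * \<alpha> * L" by simp
  thus ?thesis using L by (simp add: divide_le_eq mult.commute mult.left_commute)
qed

lemma dss_nonneg:
  assumes D: "is_exact_dss n k d \<alpha> \<gamma> L F enc"
  shows "0 \<le> log 2 (real (card F)) / L"
proof -
  have L: "L > 0" and fin: "finite F" and ne: "F \<noteq> {}" using D unfolding is_exact_dss_def by blast+
  have "1 \<le> real (card F)" using fin ne by (simp add: Suc_leI card_gt_0_iff)
  thus ?thesis using L by simp
qed

lemma dss_trivial:
  assumes "0 \<le> \<alpha>" "0 \<le> \<gamma>"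
  shows "is_exact_dss n k d \<alpha> \<gamma> 1 {0} (\<lambda>_ _. 0)"
proof -
  have g: "0 \<le> \<gamma> / real d" using assms by simp
  show ?thesis unfolding is_exact_dss_def
    using assms g by (auto intro!: exI[of _ "\<lambda>_ _. 0"] exI[of _ "\<lambda>_. 0"] ge_one_powr_ge_zero)
qed


lemma card_const_img: "real (card ((\<lambda>f. (c::nat)) ` F)) \<le> 2 powr 0"
proof -
  have "(\<lambda>f. c) ` F \<subseteq> {c}" by auto
  hence "card ((\<lambda>f. c) ` F) \<le> card {c}" by (intro card_mono) auto
  thus ?thesis by simp
qed

lemma card_inter_ge:
  assumes K: "K \<subseteq> {..<n}" "finite K" and G: "G \<subseteq> {..<n}" "card G = m"
  shows "card K \<le> card (K \<inter> G) + (n - m)"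
proof -
  have fG: "finite G" using G(1) finite_subset by blast
  have "K \<subseteq> (K \<inter> G) \<union> ({..<n} - G)" using K by auto
  hence "card K \<le> card ((K \<inter> G) \<union> ({..<n} - G))" by (intro card_mono) (use K(2) in auto)
  also have "\<dots> \<le> card (K \<inter> G) + card ({..<n} - G)" by (rule card_Un_le)
  also have "card ({..<n} - G) = n - m" using G fG by (simp add: card_Diff_subset)
  finally show ?thesis .
qed

lemma pcode_embed:
  assumes P: "pcode m kk dd F E (\<lambda>_. A) (\<lambda>_ _ _. B)"
    and G: "G \<subseteq> {..<n}" and sig: "bij_betw \<sigma> G {..<m}"
    and kk: "kk + (n - m) \<le> k"
    and Sel: "\<And>i H. i \<in> G \<Longrightarrow> H \<subseteq> {..<n} - {i} \<Longrightarrow> card H = d \<Longrightarrow> Sel i H \<subseteq> H \<inter> G \<and> card (Sel i H) = dd"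
  shows "pcode n k d F (\<lambda>x f. if x \<in> G then E (\<sigma> x) f else 0) (\<lambda>x. if x \<in> G then A else 0)
           (\<lambda>i H h. if i \<in> G \<and> h \<in> Sel i H then B else 0)"
proof -
  define e where "e = (\<lambda>x f. if x \<in> G then E (\<sigma> x) f else (0::nat))"
  have inj: "inj_on \<sigma> G" and img: "\<sigma> ` G = {..<m}" using sig by (auto simp: bij_betw_def)
  have cG: "card G = m" using bij_betw_same_card[OF sig] by simp
  have sG: "\<sigma> x < m" if "x \<in> G" for x using img that by auto
  have "pcode n k d F e (\<lambda>x. if x \<in> G then A else 0) (\<lambda>i H h. if i \<in> G \<and> h \<in> Sel i H then B else 0)"
  proof (rule pcodeI)
    show "finite F" "F \<noteq> {}" using pcode_fin[OF P] pcode_ne[OF P] by auto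
  next
    fix i assume i: "i < n"
    show "real (card (e i ` F)) \<le> 2 powr (if i \<in> G then A else 0)"
    proof (cases "i \<in> G")
      case True
      have "e i ` F = E (\<sigma> i) ` F" unfolding e_def using True by simp
      thus ?thesis using pcode_stor[OF P sG[OF True]] True by simp
    next
      case False
      have "e i ` F = (\<lambda>f. 0) ` F" unfolding e_def using False by simp
      thus ?thesis using card_const_img[of 0 F] False by simp
    qed
  next
    fix K assume K: "K \<subseteq> {..<n}" "card K = k"
    have fK: "finite K" using K(1) finite_subset by blast
    have "kk \<le> card (K \<inter> G)" using card_inter_ge[OF K(1) fK G cG] K(2) kk by linarith
    then obtain K' where K': "K' \<subseteq> K \<inter> G" "card K' = kk" by (meson obtain_subset_with_card_n)
    have injK': "inj_on \<sigma> K'" using inj K'(1) inj_on_subset by blast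
    have K''1: "\<sigma> ` K' \<subseteq> {..<m}" using K'(1) sG by auto
    have K''2: "card (\<sigma> ` K') = kk" using card_image[OF injK'] K'(2) by simp
    have injE: "inj_on (\<lambda>f. restrict (\<lambda>j. E j f) (\<sigma> ` K')) F" by (rule pcode_recon[OF P K''1 K''2])
    show "inj_on (\<lambda>f. restrict (\<lambda>j. e j f) K) F"
    proof (rule inj_onI)
      fix f g assume fg: "f \<in> F" "g \<in> F" and eq: "restrict (\<lambda>j. e j f) K = restrict (\<lambda>j. e j g) K"
      have "restrict (\<lambda>j. E j f) (\<sigma> ` K') = restrict (\<lambda>j. E j g) (\<sigma> ` K')"
      proof
        fix y show "restrict (\<lambda>j. E j f) (\<sigma> ` K') y = restrict (\<lambda>j. E j g) (\<sigma> ` K') y"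
        proof (cases "y \<in> \<sigma> ` K'")
          case True
          then obtain x where x: "x \<in> K'" "y = \<sigma> x" by blast
          have "x \<in> K" "x \<in> G" using x K'(1) by auto
          hence "e x f = e x g" using fun_cong[OF eq, of x] by simp
          thus ?thesis using True x \<open>x \<in> G\<close> unfolding e_def by simp
        qed simp
      qed
      thus "f = g" using injE fg by (auto dest: inj_onD)
    qed
  next
    fix i H assume i: "i < n" and H: "H \<subseteq> {..<n} - {i}" "card H = d"
    show "\<exists>(msg :: nat \<Rightarrow> nat \<Rightarrow> nat) (rep :: (nat \<Rightarrow> nat) \<Rightarrow> nat).
       (\<forall>h\<in>H. real (card ((\<lambda>f. msg h (e h f)) ` F)) \<le> 2 powr (if i \<in> G \<and> h \<in> Sel i H then B else 0)) \<and>
       (\<forall>f\<in>F. rep (restrict (\<lambda>h. msg h (e h f)) H) = e i f)"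
    proof (cases "i \<in> G")
      case False
      have m: "\<forall>h\<in>H. real (card ((\<lambda>f. 0::nat) ` F)) \<le> 2 powr (if i \<in> G \<and> h \<in> Sel i H then B else 0)"
        using False card_const_img[of 0 F] by simp
      have r: "\<forall>f\<in>F. (0::nat) = e i f" using False unfolding e_def by simp
      show ?thesis by (rule exI[of _ "\<lambda>_ _. 0::nat"], rule exI[of _ "\<lambda>_. 0::nat"]) (use m r in simp)
    next
      case True
      define S where "S = Sel i H"
      have S: "S \<subseteq> H \<inter> G" "card S = dd" using Sel[OF True H] unfolding S_def by auto
      have injS: "inj_on \<sigma> S" using inj S(1) inj_on_subset by blast
      have iS: "i \<notin> S" using S(1) H(1) by auto
      have H'1: "\<sigma> ` S \<subseteq> {..<m} - {\<sigma> i}"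
      proof
        fix y assume "y \<in> \<sigma> ` S"
        then obtain x where x: "x \<in> S" "y = \<sigma> x" by blast
        have "x \<in> G" using x S(1) by auto
        moreover have "x \<noteq> i" using x iS by auto
        ultimately have "\<sigma> x \<noteq> \<sigma> i" using inj True by (auto dest: inj_onD)
        thus "y \<in> {..<m} - {\<sigma> i}" using x sG[OF \<open>x \<in> G\<close>] by auto
      qed
      have H'2: "card (\<sigma> ` S) = dd" using card_image[OF injS] S(2) by simp
      obtain msg0 :: "nat \<Rightarrow> nat \<Rightarrow> nat" and rep0 :: "(nat \<Rightarrow> nat) \<Rightarrow> nat" where
        m0: "\<forall>h\<in>\<sigma> ` S. real (card ((\<lambda>f. msg0 h (E h f)) ` F)) \<le> 2 powr B" and
        r0: "\<forall>f\<in>F. rep0 (restrict (\<lambda>h. msg0 h (E h f)) (\<sigma> ` S)) = E (\<sigma> i) f"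
        using pcode_rep[OF P sG[OF True] H'1 H'2] by blast
      define si where "si = the_inv_into G \<sigma>"
      have si1: "si (\<sigma> x) = x" if "x \<in> G" for x unfolding si_def using the_inv_into_f_f[OF inj that] .
      define msg where "msg = (\<lambda>h y. if h \<in> S then msg0 (\<sigma> h) y else (0::nat))"
      define rep where "rep = (\<lambda>g. rep0 (restrict (\<lambda>y. g (si y)) (\<sigma> ` S)))"
      have "\<forall>h\<in>H. real (card ((\<lambda>f. msg h (e h f)) ` F)) \<le> 2 powr (if i \<in> G \<and> h \<in> Sel i H then B else 0)"
      proof
        fix h assume h: "h \<in> H"
        show "real (card ((\<lambda>f. msg h (e h f)) ` F)) \<le> 2 powr (if i \<in> G \<and> h \<in> Sel i H then B else 0)"
        proof (cases "h \<in> S")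
          case True
          have "h \<in> G" using True S(1) by auto
          hence "(\<lambda>f. msg h (e h f)) ` F = (\<lambda>f. msg0 (\<sigma> h) (E (\<sigma> h) f)) ` F"
            unfolding msg_def e_def using True by simp
          thus ?thesis using m0 True \<open>i \<in> G\<close> unfolding S_def by auto
        next
          case False
          have "(\<lambda>f. msg h (e h f)) ` F = (\<lambda>f. 0) ` F" unfolding msg_def using False by simp
          thus ?thesis using False card_const_img[of 0 F] unfolding S_def by simp
        qed
      qed
      moreover have "\<forall>f\<in>F. rep (restrict (\<lambda>h. msg h (e h f)) H) = e i f"
      proof
        fix f assume f: "f \<in> F"
        have "restrict (\<lambda>y. restrict (\<lambda>h. msg h (e h f)) H (si y)) (\<sigma> ` S)
              = restrict (\<lambda>h. msg0 h (E h f)) (\<sigma> ` S)"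
        proof
          fix y show "restrict (\<lambda>y. restrict (\<lambda>h. msg h (e h f)) H (si y)) (\<sigma> ` S) y
              = restrict (\<lambda>h. msg0 h (E h f)) (\<sigma> ` S) y"
          proof (cases "y \<in> \<sigma> ` S")
            case True
            then obtain x where x: "x \<in> S" "y = \<sigma> x" by blast
            have xG: "x \<in> G" "x \<in> H" using x S(1) by auto
            have "si y = x" using x si1 xG by simp
            thus ?thesis using True x xG unfolding msg_def e_def by simp
          qed simp
        qed
        thus "rep (restrict (\<lambda>h. msg h (e h f)) H) = e i f"
          unfolding rep_def using r0 f \<open>i \<in> G\<close> unfolding e_def by simp
      qed
      ultimately show ?thesis by blast
    qed
  qed
  thus ?thesis unfolding e_def .
qed


lemma rank_card:
  fixes p :: "nat \<Rightarrow> nat"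
  assumes A: "finite A" and inj: "inj_on p A" and r: "r \<le> card A"
  shows "card {x\<in>A. card {y\<in>A. p y < p x} < r} = r"
proof -
  define rk where "rk = (\<lambda>x. card {y\<in>A. p y < p x})"
  have lt: "rk x < card A" if "x \<in> A" for x
  proof -
    have "{y\<in>A. p y < p x} \<subset> A" using that by auto
    thus ?thesis unfolding rk_def using A by (rule psubset_card_mono[rotated])
  qed
  have mono: "rk x < rk x'" if "x \<in> A" "x' \<in> A" "p x < p x'" for x x'
  proof -
    have "{y\<in>A. p y < p x} \<subset> {y\<in>A. p y < p x'}" using that by auto
    thus ?thesis unfolding rk_def using A by (intro psubset_card_mono) auto
  qed
  have injrk: "inj_on rk A"
  proof (rule inj_onI)
    fix x x' assume xx: "x \<in> A" "x' \<in> A" "rk x = rk x'"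
    show "x = x'"
    proof (rule ccontr)
      assume "x \<noteq> x'"
      hence "p x \<noteq> p x'" using inj xx by (auto dest: inj_onD)
      hence "p x < p x' \<or> p x' < p x" by auto
      thus False using mono[OF xx(1,2)] mono[OF xx(2,1)] xx(3) by auto
    qed
  qed
  have imgA: "rk ` A = {..<card A}"
  proof (rule card_subset_eq)
    show "rk ` A \<subseteq> {..<card A}" using lt by auto
    show "card (rk ` A) = card {..<card A}" using card_image[OF injrk] by simp
  qed simp
  have "rk ` {x\<in>A. rk x < r} = {..<r}"
  proof
    show "rk ` {x\<in>A. rk x < r} \<subseteq> {..<r}" by auto
    show "{..<r} \<subseteq> rk ` {x\<in>A. rk x < r}"
    proof
      fix j assume j: "j \<in> {..<r}"
      hence "j \<in> rk ` A" using imgA r by auto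
      then obtain x where "x \<in> A" "j = rk x" by blast
      thus "j \<in> rk ` {x\<in>A. rk x < r}" using j by auto
    qed
  qed
  moreover have "inj_on rk {x\<in>A. rk x < r}" using injrk by (rule inj_on_subset) auto
  ultimately have "card {x\<in>A. rk x < r} = card {..<r}" by (metis card_image)
  thus ?thesis unfolding rk_def by simp
qed

definition Sel :: "(nat \<Rightarrow> nat) \<Rightarrow> (nat \<Rightarrow> nat) \<Rightarrow> (nat \<Rightarrow> nat) \<Rightarrow> nat \<Rightarrow> nat set \<Rightarrow> nat set" where
  "Sel grp dd \<pi> i H = {x\<in>H. grp (\<pi> x) = grp (\<pi> i) \<and>
      card {y\<in>H. grp (\<pi> y) = grp (\<pi> i) \<and> \<pi> y < \<pi> x} < dd (grp (\<pi> i))}"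

lemma Sel_transpose:
  assumes h: "h \<in> H" "h' \<in> H" and i: "i \<notin> H"
  shows "(h \<in> Sel grp dd (\<pi> \<circ> transpose h h') i H) \<longleftrightarrow> (h' \<in> Sel grp dd \<pi> i H)"
proof -
  define \<tau> where "\<tau> = transpose h h'"
  have ti: "\<tau> i = i" using h i unfolding \<tau>_def by (metis transpose_apply_other)
  have th: "\<tau> h = h'" unfolding \<tau>_def by simp
  have tH: "\<tau> y \<in> H" if "y \<in> H" for y using that h unfolding \<tau>_def
    by (metis transpose_apply_first transpose_apply_other transpose_apply_second)
  define g where "g = grp (\<pi> i)"
  have eq: "{y\<in>H. grp (\<pi> y) = g \<and> \<pi> y < \<pi> h'} = \<tau> ` {y\<in>H. grp (\<pi> (\<tau> y)) = g \<and> \<pi> (\<tau> y) < \<pi> (\<tau> h)}"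
  proof
    show "{y\<in>H. grp (\<pi> y) = g \<and> \<pi> y < \<pi> h'} \<subseteq> \<tau> ` {y\<in>H. grp (\<pi> (\<tau> y)) = g \<and> \<pi> (\<tau> y) < \<pi> (\<tau> h)}"
    proof
      fix y assume y: "y \<in> {y\<in>H. grp (\<pi> y) = g \<and> \<pi> y < \<pi> h'}"
      have "\<tau> y \<in> {y\<in>H. grp (\<pi> (\<tau> y)) = g \<and> \<pi> (\<tau> y) < \<pi> (\<tau> h)}"
        using y tH th unfolding \<tau>_def by auto
      moreover have "y = \<tau> (\<tau> y)" unfolding \<tau>_def by simp
      ultimately show "y \<in> \<tau> ` {y\<in>H. grp (\<pi> (\<tau> y)) = g \<and> \<pi> (\<tau> y) < \<pi> (\<tau> h)}" by blast
    qed
    show "\<tau> ` {y\<in>H. grp (\<pi> (\<tau> y)) = g \<and> \<pi> (\<tau> y) < \<pi> (\<tau> h)} \<subseteq> {y\<in>H. grp (\<pi> y) = g \<and> \<pi> y < \<pi> h'}"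
      using tH th by auto
  qed
  have "card {y\<in>H. grp (\<pi> y) = g \<and> \<pi> y < \<pi> h'} = card {y\<in>H. grp (\<pi> (\<tau> y)) = g \<and> \<pi> (\<tau> y) < \<pi> (\<tau> h)}"
    unfolding eq unfolding \<tau>_def by (rule card_image) (rule inj_on_subset[OF inj_transpose], simp)
  thus ?thesis unfolding Sel_def \<tau>_def[symmetric] using h th ti unfolding g_def by auto
qed

lemma sym_sum:
  fixes grp dd :: "nat \<Rightarrow> nat" and Bf :: "nat \<Rightarrow> real" and n :: nat
  assumes H: "H \<subseteq> {..<n} - {i}" "card H = d" "d > 0" and h: "h \<in> H"
    and cS: "\<And>\<pi>. \<pi> permutes {..<n} \<Longrightarrow> real (card (Sel grp dd \<pi> i H)) * Bf (grp (\<pi> i)) = c"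
  shows "(\<Sum>\<pi>\<in>{\<pi>. \<pi> permutes {..<n}}. if h \<in> Sel grp dd \<pi> i H then Bf (grp (\<pi> i)) else 0)
         = real (card {\<pi>. \<pi> permutes {..<n}}) * c / real d"
proof -
  define P where "P = {\<pi>. \<pi> permutes {..<n}}"
  define f where "f = (\<lambda>h \<pi>. if h \<in> Sel grp dd \<pi> i H then Bf (grp (\<pi> i)) else (0::real))"
  have iH: "i \<notin> H" using H by auto
  have finH: "finite H" using H(1) finite_subset by blast
  have same: "sum (f h) P = sum (f h') P" if hh: "h \<in> H" "h' \<in> H" for h h'
  proof -
    define \<tau> where "\<tau> = transpose h h'"
    have tp: "\<tau> permutes {..<n}" unfolding \<tau>_def using hh H(1) by (intro permutes_swap_id) auto
    have bij: "bij_betw (\<lambda>\<pi>. \<pi> \<circ> \<tau>) P P"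
    proof (rule bij_betwI[where g="\<lambda>\<pi>. \<pi> \<circ> \<tau>"])
      show "(\<lambda>\<pi>. \<pi> \<circ> \<tau>) \<in> P \<rightarrow> P" unfolding P_def using tp by (auto intro: permutes_compose)
      show "(\<lambda>\<pi>. \<pi> \<circ> \<tau>) \<in> P \<rightarrow> P" unfolding P_def using tp by (auto intro: permutes_compose)
      show "(\<pi> \<circ> \<tau>) \<circ> \<tau> = \<pi>" for \<pi> unfolding \<tau>_def by (simp add: comp_assoc)
      show "(\<pi> \<circ> \<tau>) \<circ> \<tau> = \<pi>" for \<pi> unfolding \<tau>_def by (simp add: comp_assoc)
    qed
    have ti: "\<tau> i = i" using hh iH unfolding \<tau>_def by (metis transpose_apply_other)
    have "sum (f h) P = sum (\<lambda>\<pi>. f h (\<pi> \<circ> \<tau>)) P" by (rule sum.reindex_bij_betw[OF bij, symmetric])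
    also have "\<dots> = sum (f h') P"
      by (rule sum.cong) (use Sel_transpose[OF hh iH] ti in \<open>auto simp: f_def \<tau>_def\<close>)
    finally show ?thesis .
  qed
  have "(\<Sum>h'\<in>H. sum (f h') P) = (\<Sum>\<pi>\<in>P. \<Sum>h'\<in>H. f h' \<pi>)" by (rule sum.swap)
  also have "\<dots> = (\<Sum>\<pi>\<in>P. c)"
  proof (rule sum.cong)
    fix \<pi> assume "\<pi> \<in> P"
    hence pp: "\<pi> permutes {..<n}" unfolding P_def by simp
    have "Sel grp dd \<pi> i H \<subseteq> H" unfolding Sel_def by auto
    hence "(\<Sum>h'\<in>H. f h' \<pi>) = (\<Sum>h'\<in>Sel grp dd \<pi> i H. Bf (grp (\<pi> i)))"
      unfolding f_def using finH by (simp add: sum.If_cases Int_absorb1 Int_commute)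
    also have "\<dots> = c" using cS[OF pp] by simp
    finally show "(\<Sum>h'\<in>H. f h' \<pi>) = c" .
  qed simp
  also have "\<dots> = real (card P) * c" by simp
  finally have tot: "(\<Sum>h'\<in>H. sum (f h') P) = real (card P) * c" .
  have "(\<Sum>h'\<in>H. sum (f h') P) = (\<Sum>h'\<in>H. sum (f h) P)" by (rule sum.cong[OF refl]) (use same h in blast)
  also have "\<dots> = real d * sum (f h) P" using H(2) by simp
  finally have "real d * sum (f h) P = real (card P) * c" using tot by simp
  hence "sum (f h) P = real (card P) * c / real d" using H(3) by (simp add: field_simps)
  thus ?thesis unfolding f_def P_def .
qed


lemma main_construct:
  fixes ns grp loc :: "nat \<Rightarrow> nat" and Fg :: "nat \<Rightarrow> nat set" and Eg :: "nat \<Rightarrow> nat \<Rightarrow> nat \<Rightarrow> nat"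
  assumes k: "0 < k" "k \<le> d" "d < n"
    and nsj: "\<And>j. j \<in> {1..l} \<Longrightarrow> n - k + 1 \<le> ns j \<and> ns j \<le> n"
    and grp: "\<And>p. p < n \<Longrightarrow> grp p \<in> {1..l}"
    and loc: "\<And>j. j \<in> {1..l} \<Longrightarrow> bij_betw loc {p. p < n \<and> grp p = j} {..<ns j}"
    and codes: "\<And>j. j \<in> {1..l} \<Longrightarrow> pcode (ns j) (ns j + k - n) (ns j + d - n) (Fg j) (Eg j)
                   (\<lambda>_. \<alpha> * M) (\<lambda>_ _ _. \<gamma> / real (ns j + d - n) * M)"
    and M: "M > 0" and \<alpha>: "\<alpha> > 0" and \<gamma>: "\<gamma> > 0"
  shows "\<exists>N F e. N > 0 \<and> is_exact_dss n k d \<alpha> \<gamma> (real N * M) F e \<and>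
           card F = (\<Prod>t<l. card (Fg (Suc t))) ^ N"
proof -
  define dd where "dd = (\<lambda>j. ns j + d - n)"
  define Bf where "Bf = (\<lambda>j. \<gamma> / real (dd j) * M)"
  define Gs where "Gs = (\<lambda>(\<pi>::nat \<Rightarrow> nat) j. {x. x < n \<and> grp (\<pi> x) = j})"
  define P where "P = {\<pi>. \<pi> permutes {..<n}}"
  define S where "S = Sel grp dd"
  have ddpos: "dd j > 0" if "j \<in> {1..l}" for j using nsj[OF that] k unfolding dd_def by linarith
  have Gsub: "Gs \<pi> j \<subseteq> {..<n}" for \<pi> j unfolding Gs_def by auto
  have bijG: "bij_betw (loc \<circ> \<pi>) (Gs \<pi> j) {..<ns j}" if pP: "\<pi> \<in> P" and j: "j \<in> {1..l}" for \<pi> j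
  proof -
    have pp: "\<pi> permutes {..<n}" using pP unfolding P_def by simp
    have b0: "bij_betw \<pi> {..<n} {..<n}" using permutes_imp_bij[OF pp] .
    have "bij_betw \<pi> (Gs \<pi> j) {p. p < n \<and> grp p = j}"
    proof (rule bij_betw_subset[OF b0])
      show "Gs \<pi> j \<subseteq> {..<n}" by (rule Gsub)
      show "\<pi> ` Gs \<pi> j = {p. p < n \<and> grp p = j}"
      proof
        show "\<pi> ` Gs \<pi> j \<subseteq> {p. p < n \<and> grp p = j}"
          unfolding Gs_def using permutes_in_image[OF pp] by auto
        show "{p. p < n \<and> grp p = j} \<subseteq> \<pi> ` Gs \<pi> j"
        proof
          fix p assume p: "p \<in> {p. p < n \<and> grp p = j}"
          have "p \<in> \<pi> ` {..<n}" using permutes_image[OF pp] p by auto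
          then obtain x where "x < n" "p = \<pi> x" by auto
          thus "p \<in> \<pi> ` Gs \<pi> j" using p unfolding Gs_def by auto
        qed
      qed
    qed
    thus ?thesis using loc[OF j] by (rule bij_betw_trans)
  qed
  have cardG: "card (Gs \<pi> j) = ns j" if "\<pi> \<in> P" "j \<in> {1..l}" for \<pi> j
    using bij_betw_same_card[OF bijG[OF that]] by simp
  have selprop: "S \<pi> i H \<subseteq> H \<inter> Gs \<pi> j \<and> card (S \<pi> i H) = dd j"
    if pP: "\<pi> \<in> P" and j: "j \<in> {1..l}" and i: "i \<in> Gs \<pi> j" and H: "H \<subseteq> {..<n} - {i}" "card H = d"
    for \<pi> j i H
  proof -
    have pp: "\<pi> permutes {..<n}" using pP unfolding P_def by simp
    have gi: "grp (\<pi> i) = j" using i unfolding Gs_def by simp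
    define A where "A = {x\<in>H. grp (\<pi> x) = j}"
    have AHG: "A = H \<inter> Gs \<pi> j" unfolding A_def Gs_def using H(1) by auto
    have finH: "finite H" using H(1) finite_subset by blast
    have finA: "finite A" unfolding A_def using finH by simp
    have injA: "inj_on \<pi> A" using permutes_inj[OF pp] inj_on_subset by blast
    have "card H \<le> card (H \<inter> Gs \<pi> j) + (n - ns j)"
      by (rule card_inter_ge) (use H finH Gsub cardG[OF pP j] in auto)
    hence ddA: "dd j \<le> card A" using H(2) nsj[OF j] unfolding dd_def AHG by linarith
    have SA: "S \<pi> i H = {x\<in>A. card {y\<in>A. \<pi> y < \<pi> x} < dd j}"
      unfolding S_def Sel_def A_def gi by (rule Collect_cong) (auto intro!: arg_cong[where f=card])
    have "card (S \<pi> i H) = dd j" unfolding SA by (rule rank_card[OF finA injA ddA])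
    moreover have "S \<pi> i H \<subseteq> H \<inter> Gs \<pi> j" unfolding SA AHG by auto
    ultimately show ?thesis by simp
  qed
  define ee where "ee = (\<lambda>\<pi> t x f. if x \<in> Gs \<pi> (Suc t) then Eg (Suc t) ((loc \<circ> \<pi>) x) f else (0::nat))"
  define ae where "ae = (\<lambda>\<pi> t x. if x \<in> Gs \<pi> (Suc t) then \<alpha> * M else (0::real))"
  define be where "be = (\<lambda>\<pi> t i H h. if i \<in> Gs \<pi> (Suc t) \<and> h \<in> S \<pi> i H then \<gamma> / real (ns (Suc t) + d - n) * M else (0::real))"
  have emb: "pcode n k d (Fg (Suc t)) (ee \<pi> t) (ae \<pi> t) (be \<pi> t)" if pP: "\<pi> \<in> P" and t: "t < l" for \<pi> t
  proof -
    have j: "Suc t \<in> {1..l}" using t by auto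
    show ?thesis unfolding ee_def ae_def be_def
    proof (rule pcode_embed[OF codes[OF j] Gsub bijG[OF pP j]])
      show "ns (Suc t) + k - n + (n - ns (Suc t)) \<le> k" using nsj[OF j] k by linarith
      show "S \<pi> i H \<subseteq> H \<inter> Gs \<pi> (Suc t) \<and> card (S \<pi> i H) = ns (Suc t) + d - n"
        if "i \<in> Gs \<pi> (Suc t)" "H \<subseteq> {..<n} - {i}" "card H = d" for i H
        using selprop[OF pP j that] unfolding dd_def by simp
    qed
  qed
  define F1 where "F1 = code l ` PiE {..<l} (\<lambda>t. Fg (Suc t))"
  define e1 where "e1 = (\<lambda>\<pi> i x. code l (\<lambda>t. ee \<pi> t i (list_decode x ! t)))"
  define b1 where "b1 = (\<lambda>\<pi> i H h. if h \<in> S \<pi> i H then Bf (grp (\<pi> i)) else (0::real))"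
  have lvl1: "pcode n k d F1 (e1 \<pi>) (\<lambda>_. \<alpha> * M) (b1 \<pi>)" and cardF1: "card F1 = (\<Prod>t<l. card (Fg (Suc t)))"
    if pP: "\<pi> \<in> P" for \<pi>
  proof -
    have pr: "pcode n k d F1 (e1 \<pi>) (\<lambda>i. \<Sum>t<l. ae \<pi> t i) (\<lambda>i H h. \<Sum>t<l. be \<pi> t i H h)
         \<and> card F1 = (\<Prod>t<l. card (Fg (Suc t)))"
      unfolding F1_def e1_def by (rule pcode_prod) (use emb[OF pP] in blast)
    thus "card F1 = (\<Prod>t<l. card (Fg (Suc t)))" by simp
    have gx: "x \<in> Gs \<pi> (Suc t) \<longleftrightarrow> t = grp (\<pi> x) - 1" if "x < n" for x t
    proof -
      have "\<pi> x < n" using that pP permutes_in_image unfolding P_def by fastforce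
      hence "grp (\<pi> x) \<in> {1..l}" by (rule grp)
      thus ?thesis unfolding Gs_def using that by auto
    qed
    have gl: "grp (\<pi> x) - 1 < l \<and> Suc (grp (\<pi> x) - 1) = grp (\<pi> x)" if "x < n" for x
    proof -
      have "\<pi> x < n" using that pP permutes_in_image unfolding P_def by fastforce
      hence "grp (\<pi> x) \<in> {1..l}" by (rule grp)
      thus ?thesis by auto
    qed
    show "pcode n k d F1 (e1 \<pi>) (\<lambda>_. \<alpha> * M) (b1 \<pi>)"
    proof (rule pcode_mono[OF conjunct1[OF pr]])
      fix x assume x: "x < n"
      have "(\<Sum>t<l. ae \<pi> t x) = (\<Sum>t<l. if t = grp (\<pi> x) - 1 then \<alpha> * M else 0)"
        unfolding ae_def using gx[OF x] by (intro sum.cong) auto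
      also have "\<dots> = \<alpha> * M" using gl[OF x] by simp
      finally show "(\<Sum>t<l. ae \<pi> t x) \<le> \<alpha> * M" by simp
    next
      fix i H h assume i: "i < n"
      have "(\<Sum>t<l. be \<pi> t i H h) = (\<Sum>t<l. if t = grp (\<pi> i) - 1 then
               (if h \<in> S \<pi> i H then \<gamma> / real (ns (Suc t) + d - n) * M else 0) else 0)"
        unfolding be_def using gx[OF i] by (intro sum.cong) auto
      also have "\<dots> = b1 \<pi> i H h" using gl[OF i] unfolding b1_def Bf_def dd_def by simp
      finally show "(\<Sum>t<l. be \<pi> t i H h) \<le> b1 \<pi> i H h" by simp
    qed
  qed
  have finP: "finite P" unfolding P_def by (rule finite_permutations) simp
  define N where "N = card P"
  have Npos: "N > 0" unfolding N_def using finP permutes_id[of "{..<n}"] unfolding P_def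
    by (auto simp: card_gt_0_iff intro: permutes_id)
  obtain pe where pe: "bij_betw pe {..<N} P"
    using ex_bij_betw_nat_finite[OF finP] unfolding N_def atLeast0LessThan by blast
  have peP: "pe t \<in> P" if "t < N" for t using pe that by (auto simp: bij_betw_def)
  define F2 where "F2 = code N ` PiE {..<N} (\<lambda>t. F1)"
  define e2 where "e2 = (\<lambda>i x. code N (\<lambda>t. e1 (pe t) i (list_decode x ! t)))"
  have pr2: "pcode n k d F2 e2 (\<lambda>i. \<Sum>t<N. \<alpha> * M) (\<lambda>i H h. \<Sum>t<N. b1 (pe t) i H h)
       \<and> card F2 = (\<Prod>t<N. card F1)"
    unfolding F2_def e2_def by (rule pcode_prod) (use lvl1 peP in blast)
  have "is_exact_dss n k d \<alpha> \<gamma> (real N * M) F2 e2"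
  proof (rule pcode_dss[OF conjunct1[OF pr2]])
    show "0 < real N * M" using Npos M by simp
    show "(\<Sum>t<N. \<alpha> * M) \<le> \<alpha> * (real N * M)" for i by simp
    fix i H h assume i: "i < n" and H: "H \<subseteq> {..<n} - {i}" "card H = d" and h: "h \<in> H"
    have "(\<Sum>t<N. b1 (pe t) i H h) = (\<Sum>\<pi>\<in>P. b1 \<pi> i H h)"
      by (rule sum.reindex_bij_betw[OF pe])
    also have "\<dots> = real (card P) * (\<gamma> * M) / real d"
      unfolding P_def b1_def S_def
    proof (rule sym_sum[OF H _ h])
      show "0 < d" using k by simp
      fix \<pi> :: "nat \<Rightarrow> nat" assume pp: "\<pi> permutes {..<n}"
      have pP: "\<pi> \<in> P" using pp unfolding P_def by simp
      have "\<pi> i < n" using i pp permutes_in_image by fastforce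
      hence j: "grp (\<pi> i) \<in> {1..l}" by (rule grp)
      have iG: "i \<in> Gs \<pi> (grp (\<pi> i))" unfolding Gs_def using i by simp
      have "card (Sel grp dd \<pi> i H) = dd (grp (\<pi> i))" using selprop[OF pP j iG H] unfolding S_def by simp
      thus "real (card (Sel grp dd \<pi> i H)) * Bf (grp (\<pi> i)) = \<gamma> * M"
        unfolding Bf_def using ddpos[OF j] by simp
    qed
    also have "\<dots> = \<gamma> / real d * (real N * M)" unfolding N_def by simp
    finally show "(\<Sum>t<N. b1 (pe t) i H h) \<le> \<gamma> / real d * (real N * M)" by simp
  qed
  moreover have "card F2 = (\<Prod>t<l. card (Fg (Suc t))) ^ N"
  proof -
    have idP: "id \<in> P" unfolding P_def by (simp add: permutes_id)
    have "card F2 = (\<Prod>t<N. card F1)" using pr2 by blast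
    also have "\<dots> = card F1 ^ N" by simp
    finally show ?thesis using cardF1[OF idP] by simp
  qed
  ultimately show ?thesis using Npos by blast
qed


lemma pow_code:
  assumes D: "is_exact_dss n k d \<alpha> \<gamma> L F enc" and mL: "real m * L \<le> M" and \<alpha>: "0 \<le> \<alpha>" and \<gamma>: "0 \<le> \<gamma>"
  shows "\<exists>F' e'. pcode n k d F' e' (\<lambda>_. \<alpha> * M) (\<lambda>_ _ _. \<gamma> / real d * M) \<and> card F' = card F ^ m"
proof -
  have P: "pcode n k d F enc (\<lambda>_. \<alpha> * L) (\<lambda>_ _ _. \<gamma> / real d * L)" by (rule dss_pcode[OF D])
  have pr: "pcode n k d (code m ` PiE {..<m} (\<lambda>_. F)) (\<lambda>i x. code m (\<lambda>t. enc i (list_decode x ! t)))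
           (\<lambda>i. \<Sum>t<m. \<alpha> * L) (\<lambda>i H h. \<Sum>t<m. \<gamma> / real d * L)
         \<and> card (code m ` PiE {..<m} (\<lambda>_. F)) = (\<Prod>t<m. card F)"
    by (rule pcode_prod) (use P in blast)
  have g: "0 \<le> \<gamma> / real d" using \<gamma> by simp
  have "pcode n k d (code m ` PiE {..<m} (\<lambda>_. F)) (\<lambda>i x. code m (\<lambda>t. enc i (list_decode x ! t)))
          (\<lambda>_. \<alpha> * M) (\<lambda>_ _ _. \<gamma> / real d * M)"
  proof (rule pcode_mono[OF conjunct1[OF pr]])
    have "(\<Sum>t<m. \<alpha> * L) = \<alpha> * (real m * L)" by simp
    also have "\<dots> \<le> \<alpha> * M" using mult_left_mono[OF mL \<alpha>] .
    finally show "(\<Sum>t<m. \<alpha> * L) \<le> \<alpha> * M" for i .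
    have "(\<Sum>t<m. \<gamma> / real d * L) = \<gamma> / real d * (real m * L)" by simp
    also have "\<dots> \<le> \<gamma> / real d * M" using mult_left_mono[OF mL g] .
    finally show "(\<Sum>t<m. \<gamma> / real d * L) \<le> \<gamma> / real d * M" for i H h .
  qed
  thus ?thesis using pr by auto
qed

lemma log_prod2:
  fixes l :: nat and x :: "nat \<Rightarrow> real"
  shows "(\<forall>t<l. 0 < x t) \<Longrightarrow> log 2 (\<Prod>t<l. x t) = (\<Sum>t<l. log 2 (x t))"
proof (induction l)
  case 0 thus ?case by simp
next
  case (Suc l)
  have p: "0 < (\<Prod>t<l. x t)" using Suc.prems by (intro prod_pos) auto
  have xl: "0 < x l" using Suc.prems by simp
  have "log 2 (\<Prod>t<Suc l. x t) = log 2 ((\<Prod>t<l. x t) * x l)" by simp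
  also have "\<dots> = log 2 (\<Prod>t<l. x t) + log 2 (x l)" by (rule log_mult_pos[OF p xl])
  also have "log 2 (\<Prod>t<l. x t) = (\<Sum>t<l. log 2 (x t))" using Suc.IH Suc.prems by simp
  finally show ?case by simp
qed

lemma per_j:
  fixes Lf r M :: real
  assumes L: "0 < Lf" and r: "0 \<le> r" and M: "Lf \<le> M"
  shows "real (nat \<lfloor>M / Lf\<rfloor>) * Lf \<le> M" and "r - Lf * r / M \<le> real (nat \<lfloor>M / Lf\<rfloor>) * Lf * r / M"
proof -
  have M0: "0 < M" using L M by linarith
  have "1 \<le> M / Lf" using L M by simp
  hence fl0: "0 \<le> \<lfloor>M / Lf\<rfloor>" by simp
  hence rm: "real (nat \<lfloor>M / Lf\<rfloor>) = real_of_int \<lfloor>M / Lf\<rfloor>" by simp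
  have "real_of_int \<lfloor>M / Lf\<rfloor> \<le> M / Lf" by (rule of_int_floor_le)
  hence "real_of_int \<lfloor>M / Lf\<rfloor> * Lf \<le> M" using L by (simp add: le_divide_eq)
  thus "real (nat \<lfloor>M / Lf\<rfloor>) * Lf \<le> M" using rm by simp
  have "M / Lf - 1 < real_of_int \<lfloor>M / Lf\<rfloor>" by linarith
  hence "M - Lf < real_of_int \<lfloor>M / Lf\<rfloor> * Lf" using L by (simp add: field_simps)
  hence "(M - Lf) * r \<le> real (nat \<lfloor>M / Lf\<rfloor>) * Lf * r" using rm r by (simp add: mult_right_mono)
  hence "(M - Lf) * r / M \<le> real (nat \<lfloor>M / Lf\<rfloor>) * Lf * r / M" using M0 by (simp add: divide_right_mono)
  moreover have "(M - Lf) * r / M = r - Lf * r / M" using M0 by (simp add: field_simps)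
  ultimately show "r - Lf * r / M \<le> real (nat \<lfloor>M / Lf\<rfloor>) * Lf * r / M" by simp
qed

definition ratioset :: "nat \<Rightarrow> nat \<Rightarrow> nat \<Rightarrow> real \<Rightarrow> real \<Rightarrow> real set" where
  "ratioset n k d \<alpha> \<gamma> = {log 2 (real (card F)) / L | L F enc. is_exact_dss n k d \<alpha> \<gamma> L F enc}"

lemma C_rs: "C_exact n k d \<alpha> \<gamma> = Sup (ratioset n k d \<alpha> \<gamma>)"
  unfolding C_exact_def ratioset_def ..

lemma rs_ne: "0 \<le> \<alpha> \<Longrightarrow> 0 \<le> \<gamma> \<Longrightarrow> ratioset n k d \<alpha> \<gamma> \<noteq> {}"
  unfolding ratioset_def using dss_trivial by blast

lemma rs_bdd: assumes "k \<le> n" shows "bdd_above (ratioset n k d \<alpha> \<gamma>)"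
  unfolding ratioset_def bdd_above_def using dss_bound[OF _ assms] by blast

lemma C_ge:
  assumes D: "is_exact_dss n k d \<alpha> \<gamma> L F enc" and "k \<le> n"
  shows "log 2 (real (card F)) / L \<le> C_exact n k d \<alpha> \<gamma>"
  unfolding C_rs by (rule cSup_upper[OF _ rs_bdd[OF assms(2)]]) (use D in \<open>auto simp: ratioset_def\<close>)


theorem proposition6p1:
  fixes n k d l :: nat and ns :: "nat \<Rightarrow> nat" and \<alpha> \<gamma> :: real
  assumes "0 < k" and "k \<le> d" and "d < n"
    and "\<forall>j\<in>{1..l}. 0 < ns j"
    and "n = (\<Sum>j=1..l. ns j)"
    and "\<forall>j\<in>{1..l}. n - k + 1 \<le> ns j"
    and "0 < \<alpha>" and "0 < \<gamma>"
  shows "C_exact n k d \<alpha> \<gamma> \<ge>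
           (\<Sum>j=1..l. C_exact (ns j) (ns j + k - n) (ns j + d - n) \<alpha> \<gamma>)"
proof -
  note k = assms(1,2,3)
  have nsum: "n = (\<Sum>j=1..l. ns j)" by (rule assms(5))
  have \<alpha>: "0 < \<alpha>" and \<gamma>: "0 < \<gamma>" using assms by auto
  have l0: "0 < l"
  proof (rule ccontr)
    assume "\<not> 0 < l" hence "l = 0" by simp
    hence "n = 0" using nsum by simp
    thus False using k by simp
  qed
  have nsj: "n - k + 1 \<le> ns j \<and> ns j \<le> n" if j: "j \<in> {1..l}" for j
  proof
    show "n - k + 1 \<le> ns j" using assms(6) j by blast
    show "ns j \<le> n" unfolding nsum by (rule member_le_sum) (use j in auto)
  qed
  define Cj where "Cj = (\<lambda>j. C_exact (ns j) (ns j + k - n) (ns j + d - n) \<alpha> \<gamma>)"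
  have kkn: "ns j + k - n \<le> ns j" if "j \<in> {1..l}" for j using nsj[OF that] k by linarith
  have main: "(\<Sum>j=1..l. Cj j) \<le> C_exact n k d \<alpha> \<gamma> + \<epsilon>" if \<epsilon>: "0 < \<epsilon>" for \<epsilon>
  proof -
    define \<epsilon>' where "\<epsilon>' = \<epsilon> / (2 * real l)"
    have \<epsilon>'pos: "0 < \<epsilon>'" unfolding \<epsilon>'_def using \<epsilon> l0 by simp
    have "\<forall>j\<in>{1..l}. \<exists>q :: real \<times> nat set \<times> (nat \<Rightarrow> nat \<Rightarrow> nat).
            is_exact_dss (ns j) (ns j + k - n) (ns j + d - n) \<alpha> \<gamma> (fst q) (fst (snd q)) (snd (snd q))
            \<and> Cj j - \<epsilon>' < log 2 (real (card (fst (snd q)))) / fst q"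
    proof
      fix j assume j: "j \<in> {1..l}"
      have ne: "ratioset (ns j) (ns j + k - n) (ns j + d - n) \<alpha> \<gamma> \<noteq> {}" using \<alpha> \<gamma> by (intro rs_ne) auto
      have bd: "bdd_above (ratioset (ns j) (ns j + k - n) (ns j + d - n) \<alpha> \<gamma>)" by (rule rs_bdd[OF kkn[OF j]])
      have "Cj j - \<epsilon>' < Sup (ratioset (ns j) (ns j + k - n) (ns j + d - n) \<alpha> \<gamma>)"
        unfolding Cj_def C_rs[symmetric] using \<epsilon>'pos by simp
      then obtain x where "x \<in> ratioset (ns j) (ns j + k - n) (ns j + d - n) \<alpha> \<gamma>" "Cj j - \<epsilon>' < x"
        using less_cSup_iff[OF ne bd] by blast
      then obtain L F enc where "is_exact_dss (ns j) (ns j + k - n) (ns j + d - n) \<alpha> \<gamma> L F enc"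
        "Cj j - \<epsilon>' < log 2 (real (card F)) / L"
        unfolding ratioset_def by blast
      thus "\<exists>q :: real \<times> nat set \<times> (nat \<Rightarrow> nat \<Rightarrow> nat).
            is_exact_dss (ns j) (ns j + k - n) (ns j + d - n) \<alpha> \<gamma> (fst q) (fst (snd q)) (snd (snd q))
            \<and> Cj j - \<epsilon>' < log 2 (real (card (fst (snd q)))) / fst q"
        by (intro exI[of _ "(L, F, enc)"]) simp
    qed
    from bchoice[OF this] obtain Q :: "nat \<Rightarrow> real \<times> nat set \<times> (nat \<Rightarrow> nat \<Rightarrow> nat)" where
      Q: "\<forall>j\<in>{1..l}. is_exact_dss (ns j) (ns j + k - n) (ns j + d - n) \<alpha> \<gamma> (fst (Q j)) (fst (snd (Q j))) (snd (snd (Q j)))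
            \<and> Cj j - \<epsilon>' < log 2 (real (card (fst (snd (Q j))))) / fst (Q j)" ..
    define Lf where "Lf = (\<lambda>j. fst (Q j))"
    define Ff where "Ff = (\<lambda>j. fst (snd (Q j)))"
    define r where "r = (\<lambda>j. log 2 (real (card (Ff j))) / Lf j)"
    have D: "is_exact_dss (ns j) (ns j + k - n) (ns j + d - n) \<alpha> \<gamma> (Lf j) (Ff j) (snd (snd (Q j)))"
      if "j \<in> {1..l}" for j using Q that unfolding Lf_def Ff_def by blast
    have rC: "Cj j - \<epsilon>' < r j" if "j \<in> {1..l}" for j using Q that unfolding r_def Lf_def Ff_def by blast
    have Lpos: "0 < Lf j" if "j \<in> {1..l}" for j using D[OF that] unfolding is_exact_dss_def by blast
    have rpos: "0 \<le> r j" if "j \<in> {1..l}" for j unfolding r_def by (rule dss_nonneg[OF D[OF that]])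
    have cpos: "0 < card (Ff j)" if "j \<in> {1..l}" for j
      using D[OF that] unfolding is_exact_dss_def by (auto simp: card_gt_0_iff)
    have logF: "log 2 (real (card (Ff j))) = Lf j * r j" if "j \<in> {1..l}" for j
      unfolding r_def using Lpos[OF that] by simp
    define SLr where "SLr = (\<Sum>j=1..l. Lf j * r j)"
    have SLr0: "0 \<le> SLr" unfolding SLr_def using Lpos rpos by (intro sum_nonneg) (auto intro: mult_nonneg_nonneg less_imp_le)
    define M where "M = (\<Sum>j=1..l. Lf j) + 2 * SLr / \<epsilon> + 1"
    have sL: "Lf j \<le> (\<Sum>j=1..l. Lf j)" if "j \<in> {1..l}" for j
      by (rule member_le_sum) (use that Lpos in \<open>auto intro: less_imp_le\<close>)
    have SLr\<epsilon>: "0 \<le> 2 * SLr / \<epsilon>" using SLr0 \<epsilon> by simp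
    have LM: "Lf j \<le> M" if "j \<in> {1..l}" for j using sL[OF that] SLr\<epsilon> unfolding M_def by linarith
    have Mpos: "0 < M" using LM[of 1] Lpos[of 1] l0 by fastforce
    define m where "m = (\<lambda>j. nat \<lfloor>M / Lf j\<rfloor>)"
    have mL: "real (m j) * Lf j \<le> M" if "j \<in> {1..l}" for j
      unfolding m_def by (rule per_j(1)[OF Lpos[OF that] rpos[OF that] LM[OF that]])
    have mr: "r j - Lf j * r j / M \<le> real (m j) * Lf j * r j / M" if "j \<in> {1..l}" for j
      unfolding m_def by (rule per_j(2)[OF Lpos[OF that] rpos[OF that] LM[OF that]])
    have "\<forall>j\<in>{1..l}. \<exists>q :: nat set \<times> (nat \<Rightarrow> nat \<Rightarrow> nat).
            pcode (ns j) (ns j + k - n) (ns j + d - n) (fst q) (snd q) (\<lambda>_. \<alpha> * M)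
              (\<lambda>_ _ _. \<gamma> / real (ns j + d - n) * M) \<and> card (fst q) = card (Ff j) ^ m j"
    proof
      fix j assume j: "j \<in> {1..l}"
      obtain F' e' where "pcode (ns j) (ns j + k - n) (ns j + d - n) F' e' (\<lambda>_. \<alpha> * M)
              (\<lambda>_ _ _. \<gamma> / real (ns j + d - n) * M) \<and> card F' = card (Ff j) ^ m j"
        using pow_code[OF D[OF j] mL[OF j]] \<alpha> \<gamma> by fastforce
      thus "\<exists>q :: nat set \<times> (nat \<Rightarrow> nat \<Rightarrow> nat).
            pcode (ns j) (ns j + k - n) (ns j + d - n) (fst q) (snd q) (\<lambda>_. \<alpha> * M)
              (\<lambda>_ _ _. \<gamma> / real (ns j + d - n) * M) \<and> card (fst q) = card (Ff j) ^ m j"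
        by (intro exI[of _ "(F', e')"]) simp
    qed
    from bchoice[OF this] obtain Q2 :: "nat \<Rightarrow> nat set \<times> (nat \<Rightarrow> nat \<Rightarrow> nat)" where
      Q2: "\<forall>j\<in>{1..l}. pcode (ns j) (ns j + k - n) (ns j + d - n) (fst (Q2 j)) (snd (Q2 j)) (\<lambda>_. \<alpha> * M)
              (\<lambda>_ _ _. \<gamma> / real (ns j + d - n) * M) \<and> card (fst (Q2 j)) = card (Ff j) ^ m j" ..
    define Sg where "Sg = (SIGMA j:{1..l}. {..<ns j})"
    have "card Sg = n" unfolding Sg_def nsum by simp
    hence "\<exists>\<beta>. bij_betw \<beta> {..<n} Sg" by (intro finite_same_card_bij) (auto simp: Sg_def)
    then obtain \<beta> where \<beta>: "bij_betw \<beta> {..<n} Sg" by blast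
    define grp where "grp = (\<lambda>p. fst (\<beta> p))"
    define loc where "loc = (\<lambda>p. snd (\<beta> p))"
    have \<beta>in: "\<beta> p \<in> Sg" if "p < n" for p using \<beta> that by (auto simp: bij_betw_def)
    have grp: "grp p \<in> {1..l}" if "p < n" for p using \<beta>in[OF that] unfolding grp_def Sg_def by auto
    have loc: "bij_betw loc {p. p < n \<and> grp p = j} {..<ns j}" if j: "j \<in> {1..l}" for j
    proof (rule bij_betw_imageI)
      show "inj_on loc {p. p < n \<and> grp p = j}"
      proof (rule inj_onI)
        fix p p' assume pp: "p \<in> {p. p < n \<and> grp p = j}" "p' \<in> {p. p < n \<and> grp p = j}" "loc p = loc p'"
        hence "\<beta> p = \<beta> p'" unfolding grp_def loc_def by (simp add: prod_eq_iff)
        thus "p = p'" using \<beta> pp by (auto simp: bij_betw_def dest: inj_onD)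
      qed
      show "loc ` {p. p < n \<and> grp p = j} = {..<ns j}"
      proof
        show "loc ` {p. p < n \<and> grp p = j} \<subseteq> {..<ns j}"
          using \<beta>in unfolding loc_def grp_def Sg_def by force
        show "{..<ns j} \<subseteq> loc ` {p. p < n \<and> grp p = j}"
        proof
          fix y assume "y \<in> {..<ns j}"
          hence "(j, y) \<in> Sg" using j unfolding Sg_def by auto
          hence "(j, y) \<in> \<beta> ` {..<n}" using \<beta> by (auto simp: bij_betw_def)
          then obtain p where "p < n" "\<beta> p = (j, y)" by auto
          thus "y \<in> loc ` {p. p < n \<and> grp p = j}" unfolding loc_def grp_def by force
        qed
      qed
    qed
    obtain N F e where NFe: "N > 0" "is_exact_dss n k d \<alpha> \<gamma> (real N * M) F e"
      "card F = (\<Prod>t<l. card (fst (Q2 (Suc t)))) ^ N"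
    proof -
      have "\<exists>N F e. N > 0 \<and> is_exact_dss n k d \<alpha> \<gamma> (real N * M) F e \<and>
           card F = (\<Prod>t<l. card (fst (Q2 (Suc t)))) ^ N"
      proof (rule main_construct[OF k _ grp loc _ Mpos \<alpha> \<gamma>])
        show "n - k + 1 \<le> ns j \<and> ns j \<le> n" if "j \<in> {1..l}" for j using nsj[OF that] .
        show "pcode (ns j) (ns j + k - n) (ns j + d - n) (fst (Q2 j)) (snd (Q2 j))
                   (\<lambda>_. \<alpha> * M) (\<lambda>_ _ _. \<gamma> / real (ns j + d - n) * M)" if "j \<in> {1..l}" for j
          using Q2 that by blast
      qed
      thus ?thesis using that by blast
    qed
    have ratio_le: "log 2 (real (card F)) / (real N * M) \<le> C_exact n k d \<alpha> \<gamma>"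
      by (rule C_ge[OF NFe(2)]) (use k in simp)
    have cQ: "card (fst (Q2 j)) = card (Ff j) ^ m j" if "j \<in> {1..l}" for j using Q2 that by blast
    have lg: "log 2 (real (card (fst (Q2 j)))) = real (m j) * (Lf j * r j)" if j: "j \<in> {1..l}" for j
      using cQ[OF j] logF[OF j] by (simp add: log_nat_power)
    have posQ: "0 < real (card (fst (Q2 (Suc t))))" if "t < l" for t
    proof -
      have j: "Suc t \<in> {1..l}" using that by simp
      show ?thesis using cQ[OF j] cpos[OF j] by simp
    qed
    have "log 2 (real (card F)) = real N * log 2 (\<Prod>t<l. real (card (fst (Q2 (Suc t)))))"
    proof -
      have pn: "0 \<le> (\<Prod>t<l. real (card (fst (Q2 (Suc t)))))" by (rule prod_nonneg) simp
      show ?thesis using NFe(3) log_nat_power[OF pn, of 2 N] by simp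
    qed
    also have "log 2 (\<Prod>t<l. real (card (fst (Q2 (Suc t))))) = (\<Sum>t<l. log 2 (real (card (fst (Q2 (Suc t))))))"
      by (rule log_prod2) (use posQ in blast)
    also have "\<dots> = (\<Sum>j=1..l. log 2 (real (card (fst (Q2 j)))))"
      by (simp add: sum.atLeast1_atMost_eq)
    also have "\<dots> = (\<Sum>j=1..l. real (m j) * (Lf j * r j))" by (rule sum.cong) (auto simp: lg)
    finally have "log 2 (real (card F)) / (real N * M) = (\<Sum>j=1..l. real (m j) * (Lf j * r j)) / M"
      using NFe(1) by simp
    also have "\<dots> = (\<Sum>j=1..l. real (m j) * Lf j * r j / M)" by (simp add: sum_divide_distrib mult.assoc)
    finally have ratio_eq: "log 2 (real (card F)) / (real N * M) = (\<Sum>j=1..l. real (m j) * Lf j * r j / M)" .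
    have "(\<Sum>j=1..l. r j - Lf j * r j / M) \<le> (\<Sum>j=1..l. real (m j) * Lf j * r j / M)"
      by (rule sum_mono) (rule mr, simp)
    moreover have "(\<Sum>j=1..l. r j - Lf j * r j / M) = (\<Sum>j=1..l. r j) - SLr / M"
      unfolding SLr_def by (simp add: sum_subtractf sum_divide_distrib)
    moreover have "SLr / M \<le> \<epsilon> / 2"
    proof -
      have "2 * SLr / \<epsilon> \<le> M" using sL[of 1] Lpos[of 1] l0 unfolding M_def by fastforce
      hence "2 * SLr \<le> M * \<epsilon>" using \<epsilon> by (simp add: divide_le_eq)
      thus ?thesis using Mpos by (simp add: divide_le_eq mult.commute)
    qed
    moreover have "(\<Sum>j=1..l. Cj j) - \<epsilon> / 2 \<le> (\<Sum>j=1..l. r j)"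
    proof -
      have "(\<Sum>j=1..l. Cj j - \<epsilon>') \<le> (\<Sum>j=1..l. r j)"
        by (rule sum_mono) (use rC in \<open>auto intro: less_imp_le\<close>)
      moreover have "(\<Sum>j=1..l. Cj j - \<epsilon>') = (\<Sum>j=1..l. Cj j) - \<epsilon> / 2"
        using l0 unfolding \<epsilon>'_def by (simp add: sum_subtractf)
      ultimately show ?thesis by simp
    qed
    ultimately have "(\<Sum>j=1..l. Cj j) - \<epsilon> \<le> log 2 (real (card F)) / (real N * M)"
      unfolding ratio_eq by linarith
    thus ?thesis using ratio_le by linarith
  qed
  have "(\<Sum>j=1..l. Cj j) \<le> C_exact n k d \<alpha> \<gamma>" by (rule field_le_epsilon) (rule main)
  thus ?thesis unfolding Cj_def by simp
qed

end
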